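(* Let $k\ge2$ and let $\mathcal{H}=(V,E)$ be a linear $k$-uniform hypergraph with $|V|=k^2$ and $|E|=k^2+1$, and let $e_0\in E$ be a hyperedge such that $\mathrm{deg}_{\mathcal{H}}(x)=k+1$ for all $x\in e_0$ and $\mathrm{deg}_{\mathcal{H}}(x)\ge k$ for all $x\in V\smallsetminus e_0$. Then (i) $\mathrm{deg}_{\mathcal{H}}(x)=k$ for all $x\in V\smallsetminus e_0$; (ii) $\mathrm{d}_{\mathcal{H}}(e)=k^2-k+1$ for all $e\in E\smallsetminus\{e_0\}$.
   Context: A hypergraph $\mathcal{H}=(V,E)$ has a finite vertex set $V$ and a finite set $E$ of nonempty subsets of $V$ (hyperedges). Linear: $|e\cap e'|\le1$ for distinct hyperedges; $k$-uniform: every hyperedge has $k$ elements. $\mathrm{deg}_{\mathcal{H}}(x)$ is the number of hyperedges containing $x$; $\mathrm{d}_{\mathcal{H}}(e)=|\{a\in E\smallsetminus\{e\}: a\cap e\ne\varnothing\}|$. *)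

theory Defs
  imports Main
begin

definition hypergraph :: "'a set \<Rightarrow> 'a set set \<Rightarrow> bool" where
  "hypergraph V E \<longleftrightarrow> finite V \<and> finite E \<and> (\<forall>e\<in>E. e \<noteq> {} \<and> e \<subseteq> V)"

definition linear_hg :: "'a set set \<Rightarrow> bool" where
  "linear_hg E \<longleftrightarrow> (\<forall>e\<in>E. \<forall>e'\<in>E. e \<noteq> e' \<longrightarrow> card (e \<inter> e') \<le> 1)"

definition uniform_hg :: "nat \<Rightarrow> 'a set set \<Rightarrow> bool" where
  "uniform_hg k E \<longleftrightarrow> (\<forall>e\<in>E. card e = k)"

definition vdeg :: "'a set set \<Rightarrow> 'a \<Rightarrow> nat" where
  "vdeg E x = card {e\<in>E. x \<in> e}"

definition edeg :: "'a set set \<Rightarrow> 'a set \<Rightarrow> nat" where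
  "edeg E e = card {a\<in>E - {e}. a \<inter> e \<noteq> {}}"

end

theory Submission
  imports Defs
begin

lemma all_eq_ge:
  fixes f :: "'b \<Rightarrow> nat"
  assumes "finite A" "\<forall>x\<in>A. f x \<ge> c" "sum f A = c * card A"
  shows "\<forall>x\<in>A. f x = c"
proof (rule ccontr)
  assume "\<not> ?thesis"
  then obtain a where "a\<in>A" "f a \<noteq> c" by blast
  with assms have "sum (\<lambda>_. c) A < sum f A"
    by (intro sum_strict_mono_ex1) (auto intro!: bexI[of _ a] simp: order_le_neq_trans)
  with assms show False by simp
qed

lemma all_eq_le:
  fixes f :: "'b \<Rightarrow> nat"
  assumes "finite A" "\<forall>x\<in>A. f x \<le> c" "sum f A = c * card A"
  shows "\<forall>x\<in>A. f x = c"
proof (rule ccontr)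
  assume "\<not> ?thesis"
  then obtain a where "a\<in>A" "f a \<noteq> c" by blast
  with assms have "sum f A < sum (\<lambda>_. c) A"
    by (intro sum_strict_mono_ex1) (auto intro!: bexI[of _ a] simp: order_le_neq_trans)
  with assms show False by simp
qed

theorem proposition4p1:
  fixes V :: "'a set" and E :: "'a set set" and k :: nat and e0 :: "'a set"
  assumes "k \<ge> 2"
    and "hypergraph V E" and "linear_hg E" and "uniform_hg k E"
    and "card V = k^2" and "card E = k^2 + 1"
    and "e0 \<in> E"
    and "\<forall>x\<in>e0. vdeg E x = k + 1"
    and "\<forall>x\<in>V - e0. vdeg E x \<ge> k"
  shows "(\<forall>x\<in>V - e0. vdeg E x = k) \<and> (\<forall>e\<in>E - {e0}. edeg E e = k^2 - k + 1)"
proof -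
  have fV: "finite V" and fE: "finite E" and sub: "\<And>e. e\<in>E \<Longrightarrow> e \<subseteq> V"
    using assms(2) unfolding hypergraph_def by auto
  have ce: "\<And>e. e\<in>E \<Longrightarrow> card e = k" using assms(4) unfolding uniform_hg_def by auto
  have lin: "\<And>e e'. e\<in>E \<Longrightarrow> e'\<in>E \<Longrightarrow> e \<noteq> e' \<Longrightarrow> card (e \<inter> e') \<le> 1"
    using assms(3) unfolding linear_hg_def by auto
  have e0V: "e0 \<subseteq> V" using sub assms(7) by auto
  have fe0: "finite e0" using e0V fV finite_subset by blast
  have ce0: "card e0 = k" using ce assms(7) by auto
  have "sum (\<lambda>x. card {e\<in>E. x\<in>e}) V = sum (\<lambda>e. card {x\<in>V. x\<in>e}) E"
    by (rule sum_multicount_gen[OF fV fE]) simp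
  also have "\<dots> = sum (\<lambda>e. k) E"
  proof (rule sum.cong)
    fix e assume "e\<in>E"
    then have "{x\<in>V. x\<in>e} = e" using sub by auto
    then show "card {x\<in>V. x\<in>e} = k" using ce \<open>e\<in>E\<close> by simp
  qed simp
  finally have tot: "sum (vdeg E) V = k * (k^2+1)" using assms(6) by (simp add: vdeg_def)
  have "sum (vdeg E) V = sum (vdeg E) e0 + sum (vdeg E) (V - e0)"
    using e0V fV by (metis sum.subset_diff add.commute)
  moreover have "sum (vdeg E) e0 = k * (k+1)" using assms(8) ce0 by simp
  ultimately have "sum (vdeg E) (V - e0) = k * (k^2+1) - k * (k+1)"
    using tot by linarith
  also have "\<dots> = k * ((k^2+1) - (k+1))" by (simp only: diff_mult_distrib2)
  also have "(k^2+1) - (k+1) = k^2 - k" by simp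
  finally have "sum (vdeg E) (V - e0) = k * (k^2 - k)" .
  moreover have "card (V - e0) = k^2 - k" using assms(5) ce0 e0V fe0 by (simp add: card_Diff_subset)
  ultimately have part1: "\<forall>x\<in>V - e0. vdeg E x = k"
    using all_eq_ge[where A="V - e0" and f="vdeg E" and c=k] fV assms(9) by auto
  have fE': "finite (E - {e0})" using fE by simp
  have "sum (\<lambda>a. card {x\<in>e0. x\<in>a}) (E - {e0}) = sum (\<lambda>x. card {a\<in>E - {e0}. x\<in>a}) e0"
    by (rule sum_multicount_gen[OF fE' fe0]) simp
  also have "\<dots> = sum (\<lambda>x. k) e0"
  proof (rule sum.cong)
    fix x assume "x\<in>e0"
    have "{a\<in>E - {e0}. x\<in>a} = {a\<in>E. x\<in>a} - {e0}" by auto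
    moreover have "card {a\<in>E. x\<in>a} = k+1" using assms(8) \<open>x\<in>e0\<close> by (simp add: vdeg_def)
    moreover have "e0 \<in> {a\<in>E. x\<in>a}" using \<open>x\<in>e0\<close> assms(7) by simp
    ultimately show "card {a\<in>E - {e0}. x\<in>a} = k" by simp
  qed simp
  also have "\<dots> = k * k" using ce0 by simp
  also have "\<dots> = 1 * card (E - {e0})" using assms(6,7) fE by (simp add: power2_eq_square)
  finally have s1: "sum (\<lambda>a. card {x\<in>e0. x\<in>a}) (E - {e0}) = 1 * card (E - {e0})" .
  have le1: "\<forall>a\<in>E - {e0}. card {x\<in>e0. x\<in>a} \<le> 1"
  proof
    fix a assume "a \<in> E - {e0}"
    have "{x\<in>e0. x\<in>a} = a \<inter> e0" by auto
    then show "card {x\<in>e0. x\<in>a} \<le> 1" using lin[of a e0] \<open>a \<in> E - {e0}\<close> assms(7) by auto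
  qed
  have meet: "\<forall>a\<in>E - {e0}. card {x\<in>e0. x\<in>a} = 1"
    by (rule all_eq_le[where f="\<lambda>a. card {x\<in>e0. x\<in>a}", OF fE' le1 s1])
  have part2: "edeg E e = k^2 - k + 1" if eE: "e \<in> E - {e0}" for e
  proof -
    have fe: "finite e" using sub eE fV finite_subset by blast
    have "{x\<in>e0. x\<in>e} = e \<inter> e0" by auto
    moreover have "card {x\<in>e0. x\<in>e} = 1" using meet eE by blast
    ultimately have "card (e \<inter> e0) = 1" by simp
    then obtain y where y: "e \<inter> e0 = {y}" by (rule card_1_singletonE)
    let ?A = "{a\<in>E - {e}. a \<inter> e \<noteq> {}}"
    have fA: "finite ?A" using fE by simp
    have "sum (\<lambda>a. card {x\<in>e. x\<in>a}) ?A = sum (\<lambda>x. card {a\<in>?A. x\<in>a}) e"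
      by (rule sum_multicount_gen[OF fA fe]) simp
    moreover have "sum (\<lambda>a. card {x\<in>e. x\<in>a}) ?A = sum (\<lambda>a. 1) ?A"
    proof (rule sum.cong)
      fix a assume a: "a \<in> ?A"
      have "{x\<in>e. x\<in>a} = a \<inter> e" by auto
      moreover have "card (a \<inter> e) \<le> 1" using lin[of a e] a eE by auto
      moreover have "finite (a \<inter> e)" using fe by simp
      moreover have "a \<inter> e \<noteq> {}" using a by simp
      moreover have "card (a \<inter> e) > 0" using \<open>finite (a \<inter> e)\<close> \<open>a \<inter> e \<noteq> {}\<close>
        by (simp add: card_gt_0_iff)
      ultimately show "card {x\<in>e. x\<in>a} = 1" by simp
    qed simp
    moreover have "sum (\<lambda>x. card {a\<in>?A. x\<in>a}) e = sum (\<lambda>x. (k-1) + (if x = y then 1 else 0)) e"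
    proof (rule sum.cong)
      fix x assume x: "x \<in> e"
      have "{a\<in>?A. x\<in>a} = {a\<in>E. x\<in>a} - {e}" using x by auto
      moreover have "e \<in> {a\<in>E. x\<in>a}" using x eE by simp
      moreover have "card {a\<in>E. x\<in>a} = k + (if x = y then 1 else 0)"
      proof (cases "x = y")
        case True
        then have "x \<in> e0" using y by auto
        then show ?thesis using assms(8) True by (simp add: vdeg_def)
      next
        case False
        then have "x \<in> V - e0" using y x sub eE by auto
        then show ?thesis using part1 False by (simp add: vdeg_def)
      qed
      ultimately show "card {a\<in>?A. x\<in>a} = (k-1) + (if x = y then 1 else 0)"
        using fE assms(1) by simp
    qed simp
    moreover have "y \<in> e" using y by auto
    moreover have "sum (\<lambda>x. (k-1) + (if x = y then 1 else 0)) e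
       = sum (\<lambda>x. k-1) e + sum (\<lambda>x. if x = y then 1 else 0) e" by (rule sum.distrib)
    moreover have "sum (\<lambda>x. k-1) e = k * (k-1)" using ce eE by simp
    moreover have "sum (\<lambda>x. if x = y then (1::nat) else 0) e = 1" using fe \<open>y \<in> e\<close> by simp
    moreover have "sum (\<lambda>a. 1::nat) ?A = card ?A" by simp
    ultimately have "card ?A = k * (k-1) + 1" by linarith
    moreover have "k * (k-1) = k^2 - k" by (simp add: power2_eq_square diff_mult_distrib2)
    ultimately show ?thesis by (simp add: edeg_def)
  qed
  show ?thesis using part1 part2 by blast
qed

end
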